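(* Let $S\subseteq[n]$. A matrix $\Delta\in\mathbb{R}^{n\times n}$ with $\Delta e_j=0$ for all $j\notin S$ is a Nash equilibrium for $(M,\Gamma,\Sigma,S)$ if and only if its columns $\delta_k=\Delta e_k$, $k\in S$, solve the system of $n|S|$ linear equations $$T^{(k,k)}\delta_k+\sum_{j\in S,\ j\neq k}T^{(k,j)}\delta_j=y_k\qquad\text{for all }k\in S.$$
   Context: Fix agents $[n]=\{1,\dots,n\}$. Let $\Sigma\in\mathbb{R}^{n\times n}$ be symmetric positive definite, $\Gamma=\mathrm{diag}(\gamma_1,\dots,\gamma_n)$ with all $\gamma_i>0$, and let $M\in\mathbb{R}^{n\times n}$ be the matrix of true beliefs with $i$-th column $\mu_i=Me_i$. For a matrix of reported negotiating positions $M'\in\mathbb{R}^{n\times n}$, the stable point for $M'$ is the unique pair $(W,P)$ of real $n\times n$ matrices with $W=W^T$, $P^T=-P$ and $M'-P=2\Sigma W\Gamma$; equivalently $\mathrm{vec}(W)=\tfrac12(\Gamma\otimes\Sigma+\Sigma\otimes\Gamma)^{-1}\mathrm{vec}(M'+M'^T)$ and $P=M'-2\Sigma W\Gamma$. Here $\mathrm{vec}$ stacks columns and $e_i$ is the $i$-th standard basis vector. Agent $i$'s (true) utility at $(W,P)$ is $g_i(W,P)=w_i^T(\mu_i-Pe_i)-\gamma_i\, w_i^T\Sigma w_i$, where $w_i=We_i$. $S\subseteq[n]$ is the set of strategic agents; honest agents $i\notin S$ report $\mu_i'=\mu_i$. A Nash equilibrium for $(M,\Gamma,\Sigma,S)$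 is a matrix $\Delta$ with $\Delta e_j=0$ for $j\notin S$ such that for each $k\in S$, when every $j\in S\setminus\{k\}$ reports $(M+\Delta)e_j$, agent $k$'s utility at the stable point is maximized (over all reports $\mu_k'\in\mathbb{R}^n$) by reporting $(M+\Delta)e_k$. Matrices: $\Pi\in\mathbb{R}^{n^2\times n^2}$ is the commutation matrix, $\Pi\,\mathrm{vec}(X)=\mathrm{vec}(X^T)$; $\Pi_k\in\mathbb{R}^{n\times n^2}$ satisfies $\Pi_k\mathrm{vec}(X)=Xe_k$. For $Z\in\mathbb{R}^{n^2\times n^2}$, $Z^{(p,q)}$ is its $n\times n$ block in block-row $p$ and block-column $q$. Set $K=\Gamma\otimes\Sigma+\Sigma\otimes\Gamma$, $L=\tfrac12(K^{-1}+K^{-1}\Pi)$, $T^{(k,k)}=L^{(k,k)}+(L^{(k,k)})^T-2\gamma_k(L^{(k,k)})^T\Sigma L^{(k,k)}$, $T^{(k,j)}=(I-2\gamma_k(L^{(k,k)})^T\Sigma)L^{(k,j)}$ for $j\neq k$, and $y_k=\tfrac12\big(2\gamma_k(L^{(k,k)})^T\Sigma-I\big)\Pi_kK^{-1}\mathrm{vec}(M+M^T)$. *)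

theory Defs
  imports "HOL-Analysis.Analysis"
begin

text \<open>Agents are the elements of a finite type 'n (so [n] ~ UNIV :: 'n set, n = CARD('n)).
  n x n matrices are real^'n^'n; vectors of length n^2 are real^('n \<times> 'n), where the
  index (i,j) corresponds to the entry X_{ij}, i.e. vec stacks columns.
  A matrix Z of size n^2 x n^2 is real^('n\<times>'n)^('n\<times>'n); its block (p,q) has
  entries Z_{(a,p),(b,q)}.\<close>

definition vecm :: "real^'n::finite^'n \<Rightarrow> real^('n \<times> 'n)" where
  "vecm X = (\<chi> ij. X $ fst ij $ snd ij)"

text \<open>Kronecker product A \<otimes> B: block (p,q) equals A_{pq} B.\<close>
definition kron :: "real^'n::finite^'n \<Rightarrow> real^'n^'n \<Rightarrow> real^('n \<times> 'n)^('n \<times> 'n)" where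
  "kron A B = (\<chi> ip. \<chi> jq. A $ snd ip $ snd jq * B $ fst ip $ fst jq)"

text \<open>Commutation matrix: Pi *v vecm X = vecm (transpose X).\<close>
definition commut :: "real^('n::finite \<times> 'n)^('n \<times> 'n)" where
  "commut = (\<chi> ij. \<chi> kl. if kl = (snd ij, fst ij) then 1 else 0)"

text \<open>Pi_k: Pi_k *v vecm X = X e_k.\<close>
definition commut_k :: "'n::finite \<Rightarrow> real^('n \<times> 'n)^'n" where
  "commut_k k = (\<chi> i. \<chi> jl. if jl = (i, k) then 1 else 0)"

definition blk :: "real^('n \<times> 'n)^('n \<times> 'n) \<Rightarrow> 'n \<Rightarrow> 'n \<Rightarrow> real^'n^'n" where
  "blk Z p q = (\<chi> a. \<chi> b. Z $ (a, p) $ (b, q))"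

definition unvec :: "real^('n \<times> 'n) \<Rightarrow> real^'n^'n" where
  "unvec v = (\<chi> i. \<chi> j. v $ (i, j))"

definition Kmat :: "real^'n::finite^'n \<Rightarrow> real^'n^'n \<Rightarrow> real^('n \<times> 'n)^('n \<times> 'n)" where
  "Kmat Gam Sig = kron Gam Sig + kron Sig Gam"

definition stableW :: "real^'n::finite^'n \<Rightarrow> real^'n^'n \<Rightarrow> real^'n^'n \<Rightarrow> real^'n^'n" where
  "stableW Gam Sig M' =
     unvec ((1/2) *\<^sub>R (matrix_inv (Kmat Gam Sig) *v vecm (M' + transpose M')))"

definition stableP :: "real^'n::finite^'n \<Rightarrow> real^'n^'n \<Rightarrow> real^'n^'n \<Rightarrow> real^'n^'n" where
  "stableP Gam Sig M' = M' - 2 *\<^sub>R (Sig ** stableW Gam Sig M' ** Gam)"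

text \<open>Agent i's true utility g_i(W,P), with gamma_i = Gam_{ii}.\<close>
definition utility :: "real^'n::finite^'n \<Rightarrow> real^'n^'n \<Rightarrow> real^'n^'n \<Rightarrow> 'n
     \<Rightarrow> real^'n::finite^'n \<Rightarrow> real^'n^'n \<Rightarrow> real" where
  "utility M Gam Sig i W P =
     column i W \<bullet> (column i M - column i P) - Gam $ i $ i * (column i W \<bullet> (Sig *v column i W))"

definition util_at :: "real^'n::finite^'n \<Rightarrow> real^'n^'n \<Rightarrow> real^'n^'n \<Rightarrow> 'n \<Rightarrow> real^'n^'n \<Rightarrow> real" where
  "util_at M Gam Sig i M' = utility M Gam Sig i (stableW Gam Sig M') (stableP Gam Sig M')"

definition replace_col :: "real^'n::finite^'n \<Rightarrow> 'n \<Rightarrow> real^'n \<Rightarrow> real^'n^'n" where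
  "replace_col A k v = (\<chi> i. \<chi> j. if j = k then v $ i else A $ i $ j)"

definition nash_eq :: "real^'n::finite^'n \<Rightarrow> real^'n^'n \<Rightarrow> real^'n^'n \<Rightarrow> 'n set \<Rightarrow> real^'n^'n \<Rightarrow> bool" where
  "nash_eq M Gam Sig S Delta \<longleftrightarrow>
     (\<forall>j. j \<notin> S \<longrightarrow> column j Delta = 0) \<and>
     (\<forall>k\<in>S. \<forall>mu'. util_at M Gam Sig k (replace_col (M + Delta) k mu')
                    \<le> util_at M Gam Sig k (M + Delta))"

definition Lmat :: "real^'n::finite^'n \<Rightarrow> real^'n^'n \<Rightarrow> real^('n \<times> 'n)^('n \<times> 'n)" where
  "Lmat Gam Sig = (1/2) *\<^sub>R (matrix_inv (Kmat Gam Sig) + matrix_inv (Kmat Gam Sig) ** commut)"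

definition Tblk :: "real^'n::finite^'n \<Rightarrow> real^'n^'n \<Rightarrow> 'n \<Rightarrow> 'n \<Rightarrow> real^'n^'n" where
  "Tblk Gam Sig k j =
     (let L = Lmat Gam Sig; Lkk = blk L k k; g = Gam $ k $ k in
      if j = k then Lkk + transpose Lkk - (2 * g) *\<^sub>R (transpose Lkk ** Sig ** Lkk)
      else (mat 1 - (2 * g) *\<^sub>R (transpose Lkk ** Sig)) ** blk L k j)"

definition yvec :: "real^'n::finite^'n \<Rightarrow> real^'n^'n \<Rightarrow> real^'n^'n \<Rightarrow> 'n \<Rightarrow> real^'n" where
  "yvec M Gam Sig k =
     (let Lkk = blk (Lmat Gam Sig) k k; g = Gam $ k $ k in
      (1/2) *\<^sub>R (((2 * g) *\<^sub>R (transpose Lkk ** Sig) - mat 1) ** commut_k k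
                   ** matrix_inv (Kmat Gam Sig)) *v vecm (M + transpose M))"

end

theory Submission
  imports Defs
begin


lemma sum_pairs: "(\<Sum>ij\<in>(UNIV::('n::finite\<times>'n) set). f ij) = (\<Sum>i\<in>UNIV. \<Sum>j\<in>UNIV. f (i,j))"
  unfolding sum.cartesian_product UNIV_Times_UNIV by simp

lemma mm_entry: "(A ** B) $ i $ j = (\<Sum>k\<in>UNIV. A $ i $ k * B $ k $ j)"
  by (simp add: matrix_matrix_mult_def)
lemma mv_entry: "(A *v x) $ i = (\<Sum>k\<in>UNIV. A $ i $ k * x $ k)"
  by (simp add: matrix_vector_mult_def)

lemma Kmat_vec:
  fixes Gam Sig V :: "real^'n::finite^'n"
  shows "Kmat Gam Sig *v vecm V = vecm (Sig ** V ** transpose Gam + Gam ** V ** transpose Sig)"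
proof -
  have "(Kmat Gam Sig *v vecm V) $ (a,p) = vecm (Sig ** V ** transpose Gam + Gam ** V ** transpose Sig) $ (a,p)" for a p
  proof -
    have "(Kmat Gam Sig *v vecm V) $ (a,p) = (\<Sum>i\<in>UNIV. \<Sum>j\<in>UNIV. (Gam $ p $ j * Sig $ a $ i + Sig $ p $ j * Gam $ a $ i) * V $ i $ j)"
      unfolding mv_entry sum_pairs by (simp add: Kmat_def kron_def vecm_def)
    also have "\<dots> = (\<Sum>j\<in>UNIV. \<Sum>i\<in>UNIV. Sig $ a $ i * V $ i $ j * Gam $ p $ j) + (\<Sum>j\<in>UNIV. \<Sum>i\<in>UNIV. Gam $ a $ i * V $ i $ j * Sig $ p $ j)"
      apply (subst sum.swap) by (simp add: algebra_simps sum.distrib)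
    also have "\<dots> = vecm (Sig ** V ** transpose Gam + Gam ** V ** transpose Sig) $ (a,p)"
      by (simp add: vecm_def mm_entry transpose_def sum_distrib_right)
    finally show ?thesis .
  qed
  then show ?thesis by (simp add: vec_eq_iff)
qed

lemma inner_sum: "(x::real^'n::finite) \<bullet> y = (\<Sum>i\<in>UNIV. x $ i * y $ i)"
  by (simp add: inner_vec_def)

lemma vecm_inj: "vecm X = vecm Y \<longleftrightarrow> X = Y"
  by (auto simp: vecm_def vec_eq_iff)

lemma vecm_add: "vecm (X + Y) = vecm X + vecm Y"
  by (simp add: vecm_def vec_eq_iff)
lemma vecm_scaleR: "vecm (c *\<^sub>R X) = c *\<^sub>R vecm X"
  by (simp add: vecm_def vec_eq_iff)
lemma vecm_unvec: "vecm (unvec u) = u"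
  by (simp add: vecm_def unvec_def vec_eq_iff)
lemma unvec_vecm: "unvec (vecm X) = X"
  by (simp add: vecm_def unvec_def vec_eq_iff)

lemma vecm0: "vecm 0 = 0"
  by (simp add: vecm_def vec_eq_iff)

locale setting =
  fixes Sig Gam :: "real^'n::finite^'n"
  assumes Sig_sym: "transpose Sig = Sig"
    and Sig_pd: "\<And>x. x \<noteq> 0 \<Longrightarrow> x \<bullet> (Sig *v x) > 0"
    and Gam_diag: "\<And>i j. i \<noteq> j \<Longrightarrow> Gam $ i $ j = 0"
    and Gam_pos: "\<And>i. Gam $ i $ i > 0"
begin

lemma Sig_ij: "Sig $ j $ i = Sig $ i $ j"
  using Sig_sym by (metis transpose_def vec_lambda_beta)

lemma sumG_r: "(\<Sum>k\<in>UNIV. f k * Gam $ k $ b) = f b * Gam $ b $ b"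
proof -
  have "(\<Sum>k\<in>UNIV. f k * Gam $ k $ b) = (\<Sum>k\<in>UNIV. if k = b then f b * Gam $ b $ b else 0)"
    by (rule sum.cong) (auto simp: Gam_diag)
  then show ?thesis by simp
qed

lemma sumG_l: "(\<Sum>k\<in>UNIV. Gam $ a $ k * f k) = Gam $ a $ a * f a"
proof -
  have "(\<Sum>k\<in>UNIV. Gam $ a $ k * f k) = (\<Sum>k\<in>UNIV. if k = a then Gam $ a $ a * f a else 0)"
    by (rule sum.cong) (auto simp: Gam_diag)
  then show ?thesis by simp
qed

lemma Gam_T: "transpose Gam = Gam"
  by (auto simp: transpose_def vec_eq_iff Gam_diag) (metis Gam_diag)

lemma Sig_psd: "x \<bullet> (Sig *v x) \<ge> 0"
  using Sig_pd[of x] by (cases "x = 0") auto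

lemma Sig_inner_sym: "x \<bullet> (Sig *v y) = y \<bullet> (Sig *v x)"
proof -
  have "x \<bullet> (Sig *v y) = (\<Sum>i\<in>UNIV. \<Sum>j\<in>UNIV. x $ i * Sig $ i $ j * y $ j)"
    by (simp add: inner_sum mv_entry sum_distrib_left mult_ac)
  also have "\<dots> = (\<Sum>j\<in>UNIV. \<Sum>i\<in>UNIV. x $ i * Sig $ i $ j * y $ j)" by (rule sum.swap)
  also have "\<dots> = y \<bullet> (Sig *v x)"
    by (simp add: inner_sum mv_entry sum_distrib_left mult_ac Sig_ij)
  finally show ?thesis .
qed

lemma SVG_entry: "(Sig ** V ** Gam) $ a $ b = (Sig *v column b V) $ a * Gam $ b $ b"
  by (simp add: mm_entry mv_entry column_def sumG_r)

lemma GVS_entry: "(Gam ** V ** Sig) $ a $ b = Gam $ a $ a * (Sig *v row a V) $ b"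
proof -
  have "(Gam ** V ** Sig) $ a $ b = (\<Sum>k\<in>UNIV. Gam $ a $ a * V $ a $ k * Sig $ k $ b)"
    by (simp add: mm_entry sumG_l sum_distrib_left mult_ac)
  also have "\<dots> = Gam $ a $ a * (Sig *v row a V) $ b"
    by (simp add: mv_entry row_def sum_distrib_left mult_ac Sig_ij)
  finally show ?thesis .
qed

lemma energy:
  "(\<Sum>a\<in>UNIV. \<Sum>b\<in>UNIV. V $ a $ b * (Sig ** V ** Gam + Gam ** V ** Sig) $ a $ b)
   = (\<Sum>b\<in>UNIV. Gam $ b $ b * (column b V \<bullet> (Sig *v column b V)))
   + (\<Sum>a\<in>UNIV. Gam $ a $ a * (row a V \<bullet> (Sig *v row a V)))"
proof -
  have "(\<Sum>a\<in>UNIV. \<Sum>b\<in>UNIV. V $ a $ b * (Sig ** V ** Gam) $ a $ b)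
      = (\<Sum>b\<in>UNIV. \<Sum>a\<in>UNIV. V $ a $ b * (Sig ** V ** Gam) $ a $ b)" by (rule sum.swap)
  also have "\<dots> = (\<Sum>b\<in>UNIV. Gam $ b $ b * (column b V \<bullet> (Sig *v column b V)))"
    by (simp add: SVG_entry inner_sum sum_distrib_left mult_ac column_def)
  finally have 1: "(\<Sum>a\<in>UNIV. \<Sum>b\<in>UNIV. V $ a $ b * (Sig ** V ** Gam) $ a $ b) = \<dots>" .
  have 2: "(\<Sum>a\<in>UNIV. \<Sum>b\<in>UNIV. V $ a $ b * (Gam ** V ** Sig) $ a $ b)
      = (\<Sum>a\<in>UNIV. Gam $ a $ a * (row a V \<bullet> (Sig *v row a V)))"
    by (simp add: GVS_entry inner_sum sum_distrib_left mult_ac row_def)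
  show ?thesis using 1 2 by (simp add: distrib_left sum.distrib)
qed

lemma homog_zero:
  assumes "Sig ** V ** Gam + Gam ** V ** Sig = 0"
  shows "V = 0"
proof -
  have E: "(\<Sum>b\<in>UNIV. Gam $ b $ b * (column b V \<bullet> (Sig *v column b V)))
   + (\<Sum>a\<in>UNIV. Gam $ a $ a * (row a V \<bullet> (Sig *v row a V))) = 0"
    using energy[of V] assms by simp
  have nn1: "\<And>b. Gam $ b $ b * (column b V \<bullet> (Sig *v column b V)) \<ge> 0"
    using Gam_pos Sig_psd by (simp add: less_imp_le)
  have nn2: "\<And>a. Gam $ a $ a * (row a V \<bullet> (Sig *v row a V)) \<ge> 0"
    using Gam_pos Sig_psd by (simp add: less_imp_le)
  have X: "(\<Sum>b\<in>UNIV. Gam $ b $ b * (column b V \<bullet> (Sig *v column b V))) \<ge> 0"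
    by (rule sum_nonneg) (rule nn1)
  have Y: "(\<Sum>a\<in>UNIV. Gam $ a $ a * (row a V \<bullet> (Sig *v row a V))) \<ge> 0"
    by (rule sum_nonneg) (rule nn2)
  have s1: "(\<Sum>b\<in>UNIV. Gam $ b $ b * (column b V \<bullet> (Sig *v column b V))) = 0"
    using E X Y by linarith
  have z: "Gam $ b $ b * (column b V \<bullet> (Sig *v column b V)) = 0" for b
    using s1 sum_nonneg_eq_0_iff[of UNIV "\<lambda>b. Gam $ b $ b * (column b V \<bullet> (Sig *v column b V))"] nn1
    by simp
  have c0: "column b V = 0" for b
  proof (rule ccontr)
    assume "column b V \<noteq> 0"
    then have "column b V \<bullet> (Sig *v column b V) > 0" by (rule Sig_pd)
    then have "Gam $ b $ b * (column b V \<bullet> (Sig *v column b V)) > 0"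
      using Gam_pos[of b] by simp
    with z[of b] show False by linarith
  qed
  have "V $ a $ b = 0" for a b
    using c0[of b] by (simp add: column_def vec_eq_iff)
  then show ?thesis by (simp add: vec_eq_iff)
qed

lemma K_inj: "inj ((*v) (Kmat Gam Sig))"
proof (rule injI)
  fix u v assume "Kmat Gam Sig *v u = Kmat Gam Sig *v v"
  then have "Kmat Gam Sig *v vecm (unvec (u - v)) = 0"
    by (simp add: vecm_unvec matrix_vector_mult_diff_distrib)
  then have "vecm (Sig ** unvec (u - v) ** Gam + Gam ** unvec (u - v) ** Sig) = vecm 0"
    by (simp add: Kmat_vec Gam_T Sig_sym vecm0)
  then have "unvec (u - v) = 0" using homog_zero vecm_inj by blast
  then have "u - v = 0" by (metis vecm_unvec vecm0)
  then show "u = v" by simp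
qed

lemma K_inv: "Kmat Gam Sig ** matrix_inv (Kmat Gam Sig) = mat 1"
proof -
  have "invertible (Kmat Gam Sig)"
    using K_inj matrix_left_invertible_injective invertible_left_inverse by blast
  then show ?thesis unfolding matrix_inv_def invertible_def by (rule someI_ex[THEN conjunct1])
qed

end



lemma vecm_diff: "vecm (X - Y) = vecm X - vecm Y"
  by (simp add: vecm_def vec_eq_iff)
lemma transpose_add: "transpose (X + Y) = transpose X + transpose (Y::real^'n::finite^'n)"
  by (simp add: transpose_def vec_eq_iff)
lemma column_transpose': "column b (transpose W) = row b W"
  by (simp add: transpose_def column_def row_def vec_eq_iff)

lemma commut_vecm: "commut *v vecm X = vecm (transpose X)"
proof -
  have e: "(if P then 1 else 0) * (c::real) = (if P then c else 0)" for P c by simp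
  show ?thesis by (simp add: vec_eq_iff commut_def mv_entry vecm_def transpose_def e sum.delta)
qed

context setting begin

definition F where "F V = Sig ** V ** Gam + Gam ** V ** Sig"

lemma vecm_F: "vecm (F V) = Kmat Gam Sig *v vecm V"
  by (simp add: F_def Kmat_vec Gam_T Sig_sym)

lemma F_diff: "F (A - B) = F A - F B"
  by (simp add: vecm_inj[symmetric] vecm_F vecm_diff matrix_vector_mult_diff_distrib)

lemma F_transpose: "F (transpose W) = transpose (F W)"
  by (simp add: vec_eq_iff F_def SVG_entry GVS_entry column_transpose')
     (simp add: transpose_def SVG_entry GVS_entry mult_ac)

lemma stable_eq: "F (stableW Gam Sig M') = (1/2) *\<^sub>R (M' + transpose M')"
proof -
  have "vecm (F (stableW Gam Sig M')) = Kmat Gam Sig *v ((1/2) *\<^sub>R (matrix_inv (Kmat Gam Sig) *v vecm (M' + transpose M')))"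
    by (simp add: vecm_F stableW_def vecm_unvec)
  also have "\<dots> = (1/2) *\<^sub>R ((Kmat Gam Sig ** matrix_inv (Kmat Gam Sig)) *v vecm (M' + transpose M'))"
    by (simp add: matrix_vector_mult_scaleR matrix_vector_mul_assoc)
  also have "\<dots> = vecm ((1/2) *\<^sub>R (M' + transpose M'))"
    by (simp add: K_inv vecm_scaleR)
  finally show ?thesis by (simp add: vecm_inj)
qed

lemma W_sym: "transpose (stableW Gam Sig M') = stableW Gam Sig M'"
proof -
  let ?W = "stableW Gam Sig M'"
  have "transpose ((1/2) *\<^sub>R (M' + transpose M')) = (1/2) *\<^sub>R (M' + transpose M')"
    by (simp add: transpose_scalar transpose_add add.commute)
  then have "F (transpose ?W) = F ?W"
    by (simp only: F_transpose stable_eq)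
  then have "F (transpose ?W - ?W) = 0" by (simp only: F_diff diff_self)
  then have "transpose ?W - ?W = 0" unfolding F_def by (rule homog_zero)
  then show ?thesis by simp
qed

lemma half_Kinv: "(1/2) *\<^sub>R (matrix_inv (Kmat Gam Sig) *v vecm (M' + transpose M')) = Lmat Gam Sig *v vecm M'"
  by (simp add: Lmat_def vecm_add commut_vecm scaleR_matrix_vector_assoc[symmetric]
      matrix_vector_mult_add_rdistrib matrix_vector_mul_assoc[symmetric] matrix_vector_right_distrib)

lemma colW: "column k (stableW Gam Sig M') = (\<Sum>j\<in>UNIV. blk (Lmat Gam Sig) k j *v column j M')"
proof -
  have "column k (stableW Gam Sig M') $ a = (\<Sum>j\<in>UNIV. blk (Lmat Gam Sig) k j *v column j M') $ a" for a
  proof -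
    have "column k (stableW Gam Sig M') $ a = (Lmat Gam Sig *v vecm M') $ (a, k)"
      by (simp add: stableW_def half_Kinv column_def unvec_def)
    also have "\<dots> = (\<Sum>b\<in>UNIV. \<Sum>j\<in>UNIV. Lmat Gam Sig $ (a,k) $ (b,j) * M' $ b $ j)"
      by (simp add: mv_entry sum_pairs vecm_def)
    also have "\<dots> = (\<Sum>j\<in>UNIV. \<Sum>b\<in>UNIV. Lmat Gam Sig $ (a,k) $ (b,j) * M' $ b $ j)"
      by (rule sum.swap)
    also have "\<dots> = (\<Sum>j\<in>UNIV. blk (Lmat Gam Sig) k j *v column j M') $ a"
      by (simp add: sum_component mv_entry blk_def column_def)
    finally show ?thesis .
  qed
  then show ?thesis by (simp add: vec_eq_iff)
qed

lemma util_formula: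
  "util_at M Gam Sig k M' =
     column k (stableW Gam Sig M') \<bullet> (column k M - column k M')
     + Gam $ k $ k * (column k (stableW Gam Sig M') \<bullet> (Sig *v column k (stableW Gam Sig M')))"
proof -
  let ?W = "stableW Gam Sig M'"
  let ?w = "column k ?W"
  have cSWG: "column k (Sig ** ?W ** Gam) = Gam $ k $ k *\<^sub>R (Sig *v ?w)"
    by (simp add: vec_eq_iff column_def[of k "Sig ** ?W ** Gam"] SVG_entry mult.commute)
  have cP: "column k (stableP Gam Sig M') = column k M' - 2 *\<^sub>R (Gam $ k $ k *\<^sub>R (Sig *v ?w))"
    unfolding stableP_def cSWG[symmetric] by (simp add: column_def vec_eq_iff)
  show ?thesis
    unfolding util_at_def utility_def cP
    by (simp add: inner_diff_right inner_add_right algebra_simps)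
qed

end


lemma inner_transpose: "(h::real^'n::finite) \<bullet> (transpose A *v y) = (A *v h) \<bullet> y"
proof -
  have "h \<bullet> (transpose A *v y) = (\<Sum>i\<in>UNIV. \<Sum>j\<in>UNIV. h $ i * A $ j $ i * y $ j)"
    by (simp add: inner_sum mv_entry transpose_def sum_distrib_left mult_ac del: transpose_matrix_vector)
  also have "\<dots> = (\<Sum>j\<in>UNIV. \<Sum>i\<in>UNIV. h $ i * A $ j $ i * y $ j)" by (rule sum.swap)
  also have "\<dots> = (A *v h) \<bullet> y"
    by (simp add: inner_sum mv_entry sum_distrib_left sum_distrib_right mult_ac)
  finally show ?thesis .
qed

lemma quad_diff:
  fixes a b h mu x0 :: "real^'n::finite" and Sig :: "real^'n^'n"
  assumes sym: "\<And>u v. u \<bullet> (Sig *v v) = v \<bullet> (Sig *v u)"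
  shows "(b + a) \<bullet> (mu - (x0 + h)) + g * ((b + a) \<bullet> (Sig *v (b + a)))
         - (b \<bullet> (mu - x0) + g * (b \<bullet> (Sig *v b)))
       = (a \<bullet> (mu - x0) - h \<bullet> b + 2 * g * (a \<bullet> (Sig *v b))) - (h \<bullet> a - g * (a \<bullet> (Sig *v a)))"
proof -
  have s: "b \<bullet> (Sig *v a) = a \<bullet> (Sig *v b)" by (rule sym)
  show ?thesis
    by (simp add: inner_add_left inner_add_right inner_diff_left inner_diff_right
        matrix_vector_right_distrib s algebra_simps inner_commute[of b h] inner_commute[of a h])
qed

lemma quad_max:
  fixes A Sig :: "real^'n::finite^'n" and c mu x0 :: "real^'n" and g :: real
  assumes sym: "\<And>u v. u \<bullet> (Sig *v v) = v \<bullet> (Sig *v u)"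
    and pd: "\<And>h. h \<noteq> 0 \<Longrightarrow> h \<bullet> (A *v h) - g * ((A *v h) \<bullet> (Sig *v (A *v h))) > 0"
  shows "(\<forall>x. (A *v x + c) \<bullet> (mu - x) + g * ((A *v x + c) \<bullet> (Sig *v (A *v x + c)))
              \<le> (A *v x0 + c) \<bullet> (mu - x0) + g * ((A *v x0 + c) \<bullet> (Sig *v (A *v x0 + c))))
     \<longleftrightarrow> transpose A *v (mu - x0) - (A *v x0 + c) + (2 * g) *\<^sub>R (transpose A *v (Sig *v (A *v x0 + c))) = 0"
  (is "(\<forall>x. ?f x \<le> ?f x0) \<longleftrightarrow> ?r = 0")
proof -
  define Q where "Q h = h \<bullet> (A *v h) - g * ((A *v h) \<bullet> (Sig *v (A *v h)))" for h
  have diff: "?f (x0 + h) - ?f x0 = h \<bullet> ?r - Q h" for h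
  proof -
    have e: "A *v (x0 + h) + c = (A *v x0 + c) + A *v h"
      by (simp add: matrix_vector_right_distrib)
    have "h \<bullet> ?r = (A *v h) \<bullet> (mu - x0) - h \<bullet> (A *v x0 + c) + 2 * g * ((A *v h) \<bullet> (Sig *v (A *v x0 + c)))"
      by (simp add: inner_diff_right inner_add_right inner_transpose del: transpose_matrix_vector)
    then show ?thesis
      unfolding e Q_def using quad_diff[OF sym, of "A *v x0 + c" "A *v h" mu x0 h g]
      by (simp add: inner_commute[of h "A *v h"])
  qed
  have Q0: "Q h \<ge> 0" for h
    using pd[of h] by (cases "h = 0") (auto simp: Q_def)
  have Qs: "Q (t *\<^sub>R h) = t^2 * Q h" for t h
    by (simp add: Q_def matrix_vector_mult_scaleR power2_eq_square algebra_simps)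
  show ?thesis
  proof
    assume max: "\<forall>x. ?f x \<le> ?f x0"
    show "?r = 0"
    proof (rule ccontr)
      assume rn: "?r \<noteq> 0"
      define t where "t = (?r \<bullet> ?r) / (2 * Q ?r)"
      have Qp: "Q ?r > 0" using pd[OF rn] by (simp add: Q_def)
      have rr: "?r \<bullet> ?r > 0" using rn by simp
      have "?f (x0 + t *\<^sub>R ?r) - ?f x0 = t * (?r \<bullet> ?r) - t^2 * Q ?r"
        by (simp add: diff Qs)
      also have "\<dots> = (?r \<bullet> ?r)^2 / (4 * Q ?r)"
        using Qp by (simp add: t_def power2_eq_square field_simps)
      also have "\<dots> > 0" using Qp rr by simp
      finally show False using max[rule_format, of "x0 + t *\<^sub>R ?r"] by simp
    qed
  next
    assume r0: "?r = 0"
    show "\<forall>x. ?f x \<le> ?f x0"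
    proof
      fix x
      have "?f (x0 + (x - x0)) - ?f x0 = - Q (x - x0)" using diff[of "x - x0"] r0 by simp
      then show "?f x \<le> ?f x0" using Q0[of "x - x0"] by simp
    qed
  qed
qed

context setting begin

lemma cols_zero:
  assumes "(\<Sum>b\<in>UNIV. Gam $ b $ b * (column b V \<bullet> (Sig *v column b V))) \<le> 0"
  shows "V = 0"
proof -
  have nn1: "\<And>b. Gam $ b $ b * (column b V \<bullet> (Sig *v column b V)) \<ge> 0"
    using Gam_pos Sig_psd by (simp add: less_imp_le)
  have X: "(\<Sum>b\<in>UNIV. Gam $ b $ b * (column b V \<bullet> (Sig *v column b V))) \<ge> 0"
    by (rule sum_nonneg) (rule nn1)
  have s1: "(\<Sum>b\<in>UNIV. Gam $ b $ b * (column b V \<bullet> (Sig *v column b V))) = 0"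
    using assms X by linarith
  have z: "Gam $ b $ b * (column b V \<bullet> (Sig *v column b V)) = 0" for b
    using s1 sum_nonneg_eq_0_iff[of UNIV "\<lambda>b. Gam $ b $ b * (column b V \<bullet> (Sig *v column b V))"] nn1
    by simp
  have c0: "column b V = 0" for b
  proof (rule ccontr)
    assume "column b V \<noteq> 0"
    then have "column b V \<bullet> (Sig *v column b V) > 0" by (rule Sig_pd)
    then have "Gam $ b $ b * (column b V \<bullet> (Sig *v column b V)) > 0"
      using Gam_pos[of b] by simp
    with z[of b] show False by linarith
  qed
  have "V $ a $ b = 0" for a b
    using c0[of b] by (simp add: column_def vec_eq_iff)
  then show ?thesis by (simp add: vec_eq_iff)
qed

lemma mv_sum: "(A::real^'n^'n) *v sum f S = (\<Sum>j\<in>S. A *v f j)"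
proof (rule vec_eq_iff[THEN iffD2], rule allI)
  fix i show "(A *v sum f S) $ i = (\<Sum>j\<in>S. A *v f j) $ i"
    by (simp add: mv_entry sum_distrib_left) (rule sum.swap)
qed

lemma col_replace0: "column j (replace_col 0 k x) = (if j = k then x else 0)"
  by (simp add: column_def replace_col_def vec_eq_iff)

lemma colW_single:
  "column k (stableW Gam Sig (replace_col 0 k x)) = blk (Lmat Gam Sig) k k *v x"
proof -
  have "(\<Sum>j\<in>UNIV. blk (Lmat Gam Sig) k j *v column j (replace_col 0 k x))
      = (\<Sum>j\<in>UNIV. if j = k then blk (Lmat Gam Sig) k k *v x else 0)"
    by (rule sum.cong) (auto simp: col_replace0)
  then show ?thesis by (simp add: colW)
qed

lemma T_quad:
  "x \<bullet> (Tblk Gam Sig k k *v x) =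
     2 * (x \<bullet> (blk (Lmat Gam Sig) k k *v x) - Gam $ k $ k *
        ((blk (Lmat Gam Sig) k k *v x) \<bullet> (Sig *v (blk (Lmat Gam Sig) k k *v x))))"
proof -
  let ?A = "blk (Lmat Gam Sig) k k"
  have "Tblk Gam Sig k k *v x = ?A *v x + transpose ?A *v x
      - (2 * Gam $ k $ k) *\<^sub>R (transpose ?A *v (Sig *v (?A *v x)))"
    by (simp add: Tblk_def Let_def matrix_vector_mult_add_rdistrib matrix_vector_mult_diff_rdistrib
        scaleR_matrix_vector_assoc[symmetric] matrix_vector_mul_assoc matrix_mul_assoc del: transpose_matrix_vector)
  then show ?thesis
    by (simp add: inner_add_right inner_diff_right inner_transpose inner_commute[of x "?A *v x"]
        del: transpose_matrix_vector)
qed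

lemma T_pd:
  assumes "x \<noteq> 0"
  shows "x \<bullet> (blk (Lmat Gam Sig) k k *v x) - Gam $ k $ k *
        ((blk (Lmat Gam Sig) k k *v x) \<bullet> (Sig *v (blk (Lmat Gam Sig) k k *v x))) > 0"
proof -
  define X where "X = replace_col 0 k x"
  define W where "W = stableW Gam Sig X"
  define w where "w = blk (Lmat Gam Sig) k k *v x"
  define q where "q b = column b W \<bullet> (Sig *v column b W)" for b
  define S where "S = (\<Sum>b\<in>UNIV. Gam $ b $ b * q b)"
  have wW: "column k W = w" unfolding W_def X_def w_def by (rule colW_single)
  have Xab: "X $ a $ b = (if b = k then x $ a else 0)" for a b
    by (simp add: X_def replace_col_def)
  have Wsym: "W $ b $ a = W $ a $ b" for a b
    using W_sym[of X] unfolding W_def[symmetric] by (metis transpose_def vec_lambda_beta)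
  have rowcol: "row a W = column a W" for a
    by (simp add: row_def column_def vec_eq_iff Wsym)
  have FW: "F W $ a $ b = (1/2) * (X $ a $ b + X $ b $ a)" for a b
    unfolding W_def stable_eq by (simp add: transpose_def)
  have sumWX: "(\<Sum>a\<in>UNIV. \<Sum>b\<in>UNIV. W $ a $ b * X $ a $ b) = w \<bullet> x"
  proof -
    have "(\<Sum>a\<in>UNIV. \<Sum>b\<in>UNIV. W $ a $ b * X $ a $ b) = (\<Sum>a\<in>UNIV. W $ a $ k * x $ a)"
      by (simp add: Xab if_distrib cong: if_cong)
    also have "\<dots> = column k W \<bullet> x" by (simp add: inner_sum column_def)
    also have "\<dots> = w \<bullet> x" using wW by simp
    finally show ?thesis .
  qed
  have swapX: "(\<Sum>a\<in>UNIV. \<Sum>b\<in>UNIV. W $ a $ b * X $ b $ a) = (\<Sum>a\<in>UNIV. \<Sum>b\<in>UNIV. W $ a $ b * X $ a $ b)"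
    by (subst sum.swap) (simp add: Wsym)
  have E1: "(\<Sum>a\<in>UNIV. \<Sum>b\<in>UNIV. W $ a $ b * F W $ a $ b) = w \<bullet> x"
  proof -
    have "(\<Sum>a\<in>UNIV. \<Sum>b\<in>UNIV. W $ a $ b * F W $ a $ b)
        = (1/2) * ((\<Sum>a\<in>UNIV. \<Sum>b\<in>UNIV. W $ a $ b * X $ a $ b) + (\<Sum>a\<in>UNIV. \<Sum>b\<in>UNIV. W $ a $ b * X $ b $ a))"
      by (simp add: FW algebra_simps sum.distrib sum_distrib_left)
    then show ?thesis using swapX sumWX by simp
  qed
  have E2: "(\<Sum>a\<in>UNIV. \<Sum>b\<in>UNIV. W $ a $ b * F W $ a $ b) = 2 * S"
    using energy[of W] unfolding F_def[symmetric] by (simp add: rowcol S_def q_def)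
  have wx: "w \<bullet> x = 2 * S" using E1 E2 by simp
  have qnn: "q b \<ge> 0" for b unfolding q_def by (rule Sig_psd)
  have Sk: "Gam $ k $ k * q k \<le> S"
    unfolding S_def by (rule member_le_sum) (auto simp: qnn Gam_pos less_imp_le)
  have qk: "q k = w \<bullet> (Sig *v w)" by (simp add: q_def wW)
  have Spos: "S > 0"
  proof (rule ccontr)
    assume "\<not> S > 0"
    then have "W = 0" using cols_zero[of W] by (simp add: S_def q_def)
    then have "F W = 0" by (simp add: F_def)
    then have Z: "X $ a $ b + X $ b $ a = 0" for a b using FW[of a b] by simp
    have "x $ a = 0" for a
      using Z[of a k] by (cases "a = k") (auto simp: Xab)
    then have "x = 0" by (simp add: vec_eq_iff)
    with assms show False by simp
  qed
  have "x \<bullet> w - Gam $ k $ k * (w \<bullet> (Sig *v w)) > 0"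
    using wx Sk Spos qk by (simp add: inner_commute)
  then show ?thesis by (simp add: w_def)
qed


lemma commutk: "commut_k k *v u = column k (unvec u)"
proof -
  have e: "(if P then 1 else 0) * (c::real) = (if P then c else 0)" for P c by simp
  show ?thesis by (simp add: vec_eq_iff commut_k_def mv_entry column_def unvec_def e sum.delta)
qed

lemma yvec_formula:
  "yvec M Gam Sig k =
     (2 * Gam $ k $ k) *\<^sub>R (transpose (blk (Lmat Gam Sig) k k) *v (Sig *v (\<Sum>j\<in>UNIV. blk (Lmat Gam Sig) k j *v column j M)))
     - (\<Sum>j\<in>UNIV. blk (Lmat Gam Sig) k j *v column j M)"
proof -
  let ?A = "blk (Lmat Gam Sig) k k"
  let ?B = "(2 * Gam $ k $ k) *\<^sub>R (transpose ?A ** Sig) - mat 1"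
  let ?v = "vecm (M + transpose M)"
  have "yvec M Gam Sig k = ?B *v (commut_k k *v ((1/2) *\<^sub>R (matrix_inv (Kmat Gam Sig) *v ?v)))"
    by (simp add: yvec_def Let_def scaleR_matrix_vector_assoc[symmetric] matrix_vector_mul_assoc
        matrix_vector_mult_scaleR matrix_mul_assoc del: transpose_matrix_vector)
  also have "commut_k k *v ((1/2) *\<^sub>R (matrix_inv (Kmat Gam Sig) *v ?v)) = column k (stableW Gam Sig M)"
    by (simp add: commutk stableW_def)
  also have "\<dots> = (\<Sum>j\<in>UNIV. blk (Lmat Gam Sig) k j *v column j M)" by (rule colW)
  finally show ?thesis
    by (simp add: matrix_vector_mult_diff_rdistrib scaleR_matrix_vector_assoc[symmetric]
        matrix_vector_mul_assoc[symmetric] del: transpose_matrix_vector)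
qed

lemma Tkk_mv:
  "Tblk Gam Sig k k *v v = blk (Lmat Gam Sig) k k *v v + transpose (blk (Lmat Gam Sig) k k) *v v
      - (2 * Gam $ k $ k) *\<^sub>R (transpose (blk (Lmat Gam Sig) k k) *v (Sig *v (blk (Lmat Gam Sig) k k *v v)))"
  by (simp add: Tblk_def Let_def matrix_vector_mult_add_rdistrib matrix_vector_mult_diff_rdistrib
        scaleR_matrix_vector_assoc[symmetric] matrix_vector_mul_assoc matrix_mul_assoc del: transpose_matrix_vector)

lemma Tkj_mv:
  assumes "j \<noteq> k"
  shows "Tblk Gam Sig k j *v v = blk (Lmat Gam Sig) k j *v v
      - (2 * Gam $ k $ k) *\<^sub>R (transpose (blk (Lmat Gam Sig) k k) *v (Sig *v (blk (Lmat Gam Sig) k j *v v)))"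
  using assms
  by (simp add: Tblk_def Let_def matrix_vector_mult_add_rdistrib matrix_vector_mult_diff_rdistrib
        scaleR_matrix_vector_assoc[symmetric] matrix_vector_mul_assoc[symmetric] del: transpose_matrix_vector)

lemma col_replace: "column j (replace_col N k x) = (if j = k then x else column j N)"
  by (simp add: column_def replace_col_def vec_eq_iff)

lemma replace_self: "replace_col N k (column k N) = N"
  by (simp add: column_def replace_col_def vec_eq_iff)

lemma colW_replace:
  "column k (stableW Gam Sig (replace_col N k x)) = blk (Lmat Gam Sig) k k *v x
     + (\<Sum>j\<in>UNIV - {k}. blk (Lmat Gam Sig) k j *v column j N)"
proof -
  have "column k (stableW Gam Sig (replace_col N k x))
      = blk (Lmat Gam Sig) k k *v column k (replace_col N k x)
        + (\<Sum>j\<in>UNIV - {k}. blk (Lmat Gam Sig) k j *v column j (replace_col N k x))"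
    unfolding colW by (simp add: sum.remove[of UNIV k])
  also have "(\<Sum>j\<in>UNIV - {k}. blk (Lmat Gam Sig) k j *v column j (replace_col N k x))
      = (\<Sum>j\<in>UNIV - {k}. blk (Lmat Gam Sig) k j *v column j N)"
    by (rule sum.cong) (auto simp: col_replace)
  finally show ?thesis by (simp add: col_replace)
qed


lemma mv_neg: "(B::real^'n^'n) *v (- v) = - (B *v v)"
  by (simp add: vec_eq_iff mv_entry sum_negf)

lemma per_k:
  assumes supp: "\<And>j. j \<notin> S \<Longrightarrow> column j Delta = 0"
  shows "(\<forall>mu'. util_at M Gam Sig k (replace_col (M + Delta) k mu') \<le> util_at M Gam Sig k (M + Delta)) \<longleftrightarrow>
     Tblk Gam Sig k k *v column k Delta + (\<Sum>j\<in>S - {k}. Tblk Gam Sig k j *v column j Delta) = yvec M Gam Sig k"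
proof -
  define A where "A = blk (Lmat Gam Sig) k k"
  define g where "g = Gam $ k $ k"
  define N where "N = M + Delta"
  define c where "c = (\<Sum>j\<in>UNIV-{k}. blk (Lmat Gam Sig) k j *v column j N)"
  define mu where "mu = column k M"
  define d where "d = column k Delta"
  define x0 where "x0 = column k N"
  define P where "P v = transpose A *v (Sig *v v)" for v
  define D where "D = (\<Sum>j\<in>UNIV-{k}. blk (Lmat Gam Sig) k j *v column j Delta)"
  define C0 where "C0 = (\<Sum>j\<in>UNIV-{k}. blk (Lmat Gam Sig) k j *v column j M)"
  define r where "r = transpose A *v (mu - x0) - (A *v x0 + c) + (2 * g) *\<^sub>R (transpose A *v (Sig *v (A *v x0 + c)))"
  have uf: "util_at M Gam Sig k (replace_col N k x) = (A *v x + c) \<bullet> (mu - x) + g * ((A *v x + c) \<bullet> (Sig *v (A *v x + c)))" for x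
    using util_formula[of M k "replace_col N k x"] colW_replace[of k N x]
    by (simp add: col_replace A_def c_def mu_def g_def)
  have u0: "util_at M Gam Sig k N = (A *v x0 + c) \<bullet> (mu - x0) + g * ((A *v x0 + c) \<bullet> (Sig *v (A *v x0 + c)))"
    using uf[of x0] by (simp add: x0_def replace_self)
  have pd: "h \<noteq> 0 \<Longrightarrow> h \<bullet> (A *v h) - g * ((A *v h) \<bullet> (Sig *v (A *v h))) > 0" for h
    unfolding A_def g_def by (rule T_pd)
  have step1: "(\<forall>mu'. util_at M Gam Sig k (replace_col (M + Delta) k mu') \<le> util_at M Gam Sig k (M + Delta)) \<longleftrightarrow> r = 0"
    unfolding N_def[symmetric] uf u0 r_def by (rule quad_max[OF Sig_inner_sym pd])
  have Padd: "P (u + v) = P u + P v" for u v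
    by (simp add: P_def matrix_vector_right_distrib del: transpose_matrix_vector)
  have Psum: "P (sum f T) = (\<Sum>j\<in>T. P (f j))" for f and T :: "'a set"
    by (simp add: P_def mv_sum del: transpose_matrix_vector)
  have colN: "column j N = column j M + column j Delta" for j
    by (simp add: N_def column_def vec_eq_iff)
  have cD: "c = C0 + D"
    by (simp add: c_def C0_def D_def colN matrix_vector_right_distrib sum.distrib)
  have D_S: "(\<Sum>j\<in>S-{k}. blk (Lmat Gam Sig) k j *v column j Delta) = D"
    unfolding D_def by (rule sum.mono_neutral_left) (auto, metis matrix_vector_mult_0_right supp)
  have sumT: "(\<Sum>j\<in>S-{k}. Tblk Gam Sig k j *v column j Delta) = D - (2 * g) *\<^sub>R P D"
  proof -
    have "(\<Sum>j\<in>S-{k}. Tblk Gam Sig k j *v column j Delta)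
        = (\<Sum>j\<in>S-{k}. blk (Lmat Gam Sig) k j *v column j Delta - (2 * g) *\<^sub>R P (blk (Lmat Gam Sig) k j *v column j Delta))"
      by (rule sum.cong) (auto simp: Tkj_mv A_def g_def P_def simp del: transpose_matrix_vector)
    also have "\<dots> = D - (2 * g) *\<^sub>R P D"
      by (simp add: sum_subtractf scaleR_sum_right[symmetric] Psum[symmetric] D_S)
    finally show ?thesis .
  qed
  have V: "(\<Sum>j\<in>UNIV. blk (Lmat Gam Sig) k j *v column j M) = A *v mu + C0"
    by (simp add: sum.remove[of UNIV k] A_def mu_def C0_def)
  have yv: "yvec M Gam Sig k = (2 * g) *\<^sub>R P (A *v mu + C0) - (A *v mu + C0)"
    using yvec_formula[of M k] by (simp add: V P_def A_def g_def del: transpose_matrix_vector)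
  have Tk: "Tblk Gam Sig k k *v d = A *v d + transpose A *v d - (2 * g) *\<^sub>R P (A *v d)"
    by (simp add: Tkk_mv A_def g_def P_def del: transpose_matrix_vector)
  have x0: "x0 = mu + d" by (simp add: x0_def mu_def d_def colN)
  have rr: "r = - (transpose A *v d) - (A *v mu + A *v d + C0 + D) + (2 * g) *\<^sub>R P (A *v mu + A *v d + C0 + D)"
    unfolding r_def P_def[symmetric] x0 cD
    by (simp add: matrix_vector_right_distrib matrix_vector_mult_diff_distrib mv_neg algebra_simps del: transpose_matrix_vector)
  have key: "(Tblk Gam Sig k k *v d + (\<Sum>j\<in>S-{k}. Tblk Gam Sig k j *v column j Delta)) - yvec M Gam Sig k = - r"
    unfolding Tk sumT yv rr by (simp add: Padd algebra_simps del: transpose_matrix_vector)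
  show ?thesis unfolding step1 d_def[symmetric]
    using key by (metis diff_eq_diff_eq diff_self neg_equal_0_iff_equal eq_iff_diff_eq_0)
qed

end

theorem mainTheorem7:
  fixes M Sig Gam Delta :: "real^'n^'n" and S :: "'n set"
  assumes Sig_sym: "transpose Sig = Sig"
    and Sig_pd: "\<And>x. x \<noteq> 0 \<Longrightarrow> x \<bullet> (Sig *v x) > 0"
    and Gam_diag: "\<And>i j. i \<noteq> j \<Longrightarrow> Gam $ i $ j = 0"
    and Gam_pos: "\<And>i. Gam $ i $ i > 0"
    and Delta_supp: "\<And>j. j \<notin> S \<Longrightarrow> column j Delta = 0"
  shows "nash_eq M Gam Sig S Delta \<longleftrightarrow>
    (\<forall>k\<in>S. Tblk Gam Sig k k *v column k Delta
             + (\<Sum>j\<in>S - {k}. Tblk Gam Sig k j *v column j Delta)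
           = yvec M Gam Sig k)"
proof -
  interpret setting Sig Gam using assms by unfold_locales auto
  show ?thesis unfolding nash_eq_def using per_k[OF Delta_supp, of S] Delta_supp by blast
qed

end
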